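(* Let $T$ be an integral domain of the form $T=K+M$, where $K$ is a subfield of $T$ and $M$ is a nonzero maximal ideal of $T$. Let $D$ be a subring of $K$ and $R=D+M$. Then: (1) If $D$ is a field, then $R$ is a completely atomic domain if and only if $T$ is a completely atomic domain. (2) If $D$ is not a field, $D$ is atomic, and $T$ is completely atomic, then $R$ is a completely atomic domain.
   Context: An atom (irreducible element) of an integral domain is a nonzero nonunit $a$ such that $a=bc$ implies $b$ or $c$ is a unit. A nonzero nonunit is atomic if it is a finite product of atoms; a domain is atomic if every nonzero nonunit is atomic. A domain is completely atomic if every nonunit divisor of an atomic element is atomic. *)

theory Defs
  imports Main
begin

text \<open>The ambient integral domain T is modelled as a type of class idom;
  subrings (K, D, R) are subsets of it, and all ring-theoretic notions
  (units, atoms, divisibility, atomicity) are taken relative to a subring S.\<close>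

definition subring_of :: "'a::idom set \<Rightarrow> bool" where
  "subring_of S \<longleftrightarrow> 0 \<in> S \<and> 1 \<in> S \<and>
     (\<forall>x\<in>S. \<forall>y\<in>S. x + y \<in> S \<and> x - y \<in> S \<and> x * y \<in> S)"

definition subfield_of :: "'a::idom set \<Rightarrow> bool" where
  "subfield_of K \<longleftrightarrow> subring_of K \<and> (\<forall>x\<in>K. x \<noteq> 0 \<longrightarrow> (\<exists>y\<in>K. x * y = 1))"

definition ideal_of :: "'a::idom set \<Rightarrow> bool" where
  "ideal_of I \<longleftrightarrow> 0 \<in> I \<and> (\<forall>x\<in>I. \<forall>y\<in>I. x + y \<in> I) \<and> (\<forall>t. \<forall>x\<in>I. t * x \<in> I)"

definition maximal_ideal :: "'a::idom set \<Rightarrow> bool" where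
  "maximal_ideal M \<longleftrightarrow> ideal_of M \<and> M \<noteq> UNIV \<and>
     (\<forall>I. ideal_of I \<and> M \<subseteq> I \<longrightarrow> I = M \<or> I = UNIV)"

definition unit_in :: "'a::idom set \<Rightarrow> 'a \<Rightarrow> bool" where
  "unit_in S a \<longleftrightarrow> a \<in> S \<and> (\<exists>b\<in>S. a * b = 1)"

definition dvd_in :: "'a::idom set \<Rightarrow> 'a \<Rightarrow> 'a \<Rightarrow> bool" where
  "dvd_in S b a \<longleftrightarrow> b \<in> S \<and> (\<exists>c\<in>S. a = b * c)"

definition atom_in :: "'a::idom set \<Rightarrow> 'a \<Rightarrow> bool" where
  "atom_in S a \<longleftrightarrow> a \<in> S \<and> a \<noteq> 0 \<and> \<not> unit_in S a \<and>
     (\<forall>b\<in>S. \<forall>c\<in>S. a = b * c \<longrightarrow> unit_in S b \<or> unit_in S c)"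

definition atomic_elem_in :: "'a::idom set \<Rightarrow> 'a \<Rightarrow> bool" where
  "atomic_elem_in S a \<longleftrightarrow> a \<in> S \<and> a \<noteq> 0 \<and> \<not> unit_in S a \<and>
     (\<exists>xs. xs \<noteq> [] \<and> (\<forall>x\<in>set xs. atom_in S x) \<and> a = prod_list xs)"

definition atomic_dom :: "'a::idom set \<Rightarrow> bool" where
  "atomic_dom S \<longleftrightarrow> (\<forall>a\<in>S. a \<noteq> 0 \<and> \<not> unit_in S a \<longrightarrow> atomic_elem_in S a)"

definition completely_atomic :: "'a::idom set \<Rightarrow> bool" where
  "completely_atomic S \<longleftrightarrow>
     (\<forall>a b. atomic_elem_in S a \<and> dvd_in S b a \<and> \<not> unit_in S b \<longrightarrow> atomic_elem_in S b)"

end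

theory Submission
  imports Defs
begin

abbreviation isu :: "'a::idom \<Rightarrow> bool" where "isu x \<equiv> x dvd 1"

lemma isu_mult_iff: "isu ((a::'a::idom) * b) \<longleftrightarrow> isu a \<and> isu b"
proof
  assume "isu (a*b)"
  then show "isu a \<and> isu b" using dvd_mult_left dvd_mult_right dvd_trans by blast
next
  assume "isu a \<and> isu b"
  then have "a * b dvd 1 * 1" using mult_dvd_mono by blast
  then show "isu (a*b)" by simp
qed

lemma isu_dvd: "(a::'a::idom) dvd b \<Longrightarrow> isu b \<Longrightarrow> isu a"
  by (rule dvd_trans)

lemma unitT: "unit_in UNIV a \<longleftrightarrow> isu a"
proof
  assume "unit_in UNIV a"
  then obtain b where "a*b = 1" unfolding unit_in_def by blast
  then show "a dvd 1" by (metis dvdI)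
next
  assume "a dvd 1"
  then obtain k where "1 = a*k" by (rule dvdE)
  then show "unit_in UNIV a" unfolding unit_in_def by (metis UNIV_I)
qed

lemma atomT: "atom_in UNIV a \<longleftrightarrow> a \<noteq> 0 \<and> \<not> isu a \<and> (\<forall>b c. a = b*c \<longrightarrow> isu b \<or> isu c)"
  unfolding atom_in_def unitT by auto

lemma dvdT: "dvd_in UNIV b a \<longleftrightarrow> b dvd a"
  unfolding dvd_in_def by (auto simp: dvd_def)

lemma atomT_unit: "atom_in UNIV a \<Longrightarrow> isu u \<Longrightarrow> atom_in UNIV (a*u)"
  unfolding atomT
proof (intro conjI allI impI)
  assume a: "a \<noteq> 0 \<and> \<not> isu a \<and> (\<forall>b c. a = b * c \<longrightarrow> isu b \<or> isu c)" and u: "isu u"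
  have "u \<noteq> 0" using u by (metis dvd_0_left_iff zero_neq_one)
  then show "a*u \<noteq> 0" using a by simp
  show "\<not> isu (a*u)" using a u isu_mult_iff by blast
  fix b c assume e: "a*u = b*c"
  from u obtain u' where u': "u*u' = 1" by (metis dvd_def)
  have "a = a*(u*u')" using u' by simp
  also have "\<dots> = (a*u)*u'" by (simp only: mult.assoc)
  also have "\<dots> = (b*u')*c" using e by (simp only: ac_simps)
  finally have "a = (b*u')*c" .
  then have "isu (b*u') \<or> isu c" using a by blast
  then show "isu b \<or> isu c" using isu_mult_iff by blast
qed

definition TUA :: "'a::idom \<Rightarrow> bool" where
  "TUA p \<longleftrightarrow> (\<exists>u xs. isu u \<and> (\<forall>x\<in>set xs. atom_in UNIV x) \<and> p = u * prod_list xs)"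

lemma TUA_mult: "TUA p \<Longrightarrow> TUA q \<Longrightarrow> TUA (p*q)"
  unfolding TUA_def
proof (elim exE conjE)
  fix u xs v ys assume "isu u" "\<forall>x\<in>set xs. atom_in UNIV x" "p = u * prod_list xs"
    "isu v" "\<forall>x\<in>set ys. atom_in UNIV x" "q = v * prod_list ys"
  then show "\<exists>u xs. isu u \<and> (\<forall>x\<in>set xs. atom_in UNIV x) \<and> p * q = u * prod_list xs"
    by (intro exI[of _ "u*v"] exI[of _ "xs@ys"]) (simp add: ac_simps isu_mult_iff ball_Un)
qed

lemma TUA_unit: "isu u \<Longrightarrow> TUA u"
  unfolding TUA_def by (intro exI[of _ u] exI[of _ "[]"]) simp

lemma TUA_atom: "atom_in UNIV a \<Longrightarrow> TUA a"
  unfolding TUA_def by (intro exI[of _ 1] exI[of _ "[a]"]) simp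

lemma prod_atoms_nonunit: "xs \<noteq> [] \<Longrightarrow> \<forall>x\<in>set xs. atom_in UNIV x \<Longrightarrow> \<not> isu (prod_list xs)"
proof (induction xs)
  case (Cons a xs)
  then have "\<not> isu a" by (simp add: atomT)
  then show ?case by (simp only: prod_list.Cons isu_mult_iff) simp
qed simp

lemma prod_atoms_nz: "\<forall>x\<in>set xs. atom_in UNIV x \<Longrightarrow> prod_list xs \<noteq> 0"
proof (induction xs)
  case (Cons a xs)
  then have "a \<noteq> 0" by (simp add: atom_in_def)
  then show ?case using Cons by simp
qed simp

lemma TUA_iff: "TUA p \<longleftrightarrow> isu p \<or> atomic_elem_in UNIV p"
proof
  assume "TUA p"
  then obtain u xs where u: "isu u" and xs: "\<forall>x\<in>set xs. atom_in UNIV x" and p: "p = u * prod_list xs"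
    unfolding TUA_def by blast
  show "isu p \<or> atomic_elem_in UNIV p"
  proof (cases xs)
    case Nil then show ?thesis using u p by simp
  next
    case (Cons y ys)
    have "p = prod_list ((y*u) # ys)" using p Cons by (simp add: algebra_simps)
    moreover have "atom_in UNIV y" using xs Cons by simp
    then have "atom_in UNIV (y*u)" using u atomT_unit by blast
    moreover have "u \<noteq> 0" using u by (metis dvd_0_left_iff zero_neq_one)
    moreover have "p \<noteq> 0" using p \<open>u \<noteq> 0\<close> prod_atoms_nz[OF xs] by simp
    moreover have "\<not> isu p"
    proof
      assume "isu p"
      then have "isu (prod_list xs)" unfolding p isu_mult_iff by simp
      then show False using prod_atoms_nonunit[OF _ xs] Cons by simp
    qed
    moreover have "\<forall>x\<in>set ((y*u) # ys). atom_in UNIV x" using xs Cons \<open>atom_in UNIV (y*u)\<close> by simp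
    ultimately have "atomic_elem_in UNIV p" unfolding atomic_elem_in_def unitT
      by (metis UNIV_I list.distinct(1))
    then show ?thesis by blast
  qed
next
  assume "isu p \<or> atomic_elem_in UNIV p"
  then show "TUA p"
  proof
    assume "isu p" then show ?thesis by (rule TUA_unit)
  next
    assume "atomic_elem_in UNIV p"
    then obtain xs where "\<forall>x\<in>set xs. atom_in UNIV x" "p = prod_list xs" unfolding atomic_elem_in_def by blast
    then show ?thesis unfolding TUA_def by (metis dvd_refl mult_1_left)
  qed
qed

lemma TUA_dvd:
  assumes ca: "completely_atomic (UNIV::'a::idom set)" and p: "TUA p" and d: "(b::'a) dvd p"
  shows "TUA b"
proof -
  have "isu p \<or> atomic_elem_in UNIV p" using p TUA_iff by blast
  then show ?thesis
  proof
    assume "isu p" then show ?thesis using d TUA_unit isu_dvd by blast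
  next
    assume pa: "atomic_elem_in UNIV p"
    show ?thesis
    proof (cases "isu b")
      case True then show ?thesis by (rule TUA_unit)
    next
      case False
      have "dvd_in UNIV b p" using d dvdT by blast
      moreover have "\<not> unit_in UNIV b" using False unitT by blast
      ultimately have "atomic_elem_in UNIV b" using ca pa unfolding completely_atomic_def by blast
      then show ?thesis using TUA_iff by blast
    qed
  qed
qed

locale KMD =
  fixes K M D :: "'a::idom set"
  assumes K: "subfield_of K" and Mi: "ideal_of M" and Mne: "M \<noteq> UNIV"
    and TKM: "\<forall>t::'a. \<exists>k\<in>K. \<exists>m\<in>M. t = k + m"
    and D: "subring_of D" and DK: "D \<subseteq> K"
begin

lemma M0: "0 \<in> M" using Mi unfolding ideal_of_def by blast
lemma M_add: "x \<in> M \<Longrightarrow> y \<in> M \<Longrightarrow> x + y \<in> M" using Mi unfolding ideal_of_def by blast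
lemma M_multL: "x \<in> M \<Longrightarrow> t * x \<in> M" using Mi unfolding ideal_of_def by blast
lemma M_multR: "x \<in> M \<Longrightarrow> x * t \<in> M" using M_multL[of x t] by (simp add: mult.commute)
lemma M_uminus: "x \<in> M \<Longrightarrow> - x \<in> M" using M_multL[of x "-1"] by simp
lemma M_diff: "x \<in> M \<Longrightarrow> y \<in> M \<Longrightarrow> x - y \<in> M" using M_add[OF _ M_uminus[of y]] by simp

lemma K0: "0 \<in> K" and K1: "1 \<in> K" using K unfolding subfield_of_def subring_of_def by auto
lemma K_add: "x \<in> K \<Longrightarrow> y \<in> K \<Longrightarrow> x + y \<in> K" using K unfolding subfield_of_def subring_of_def by blast
lemma K_diff: "x \<in> K \<Longrightarrow> y \<in> K \<Longrightarrow> x - y \<in> K" using K unfolding subfield_of_def subring_of_def by blast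
lemma K_mult: "x \<in> K \<Longrightarrow> y \<in> K \<Longrightarrow> x * y \<in> K" using K unfolding subfield_of_def subring_of_def by blast
lemma K_inv: "x \<in> K \<Longrightarrow> x \<noteq> 0 \<Longrightarrow> \<exists>y\<in>K. x * y = 1" using K unfolding subfield_of_def by blast

lemma D0: "0 \<in> D" and D1: "1 \<in> D" using D unfolding subring_of_def by auto
lemma D_mult: "x \<in> D \<Longrightarrow> y \<in> D \<Longrightarrow> x * y \<in> D" using D unfolding subring_of_def by blast

lemma one_notin_M: "1 \<notin> M"
proof
  assume "1 \<in> M"
  then have "t \<in> M" for t using M_multL[of 1 t] by simp
  then show False using Mne by blast
qed

lemma KM0: "k \<in> K \<Longrightarrow> k \<in> M \<Longrightarrow> k = 0"
proof (rule ccontr)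
  assume k: "k \<in> K" "k \<in> M" "k \<noteq> 0"
  then obtain y where "k * y = 1" using K_inv by blast
  then have "1 \<in> M" using M_multR[OF k(2), of y] by simp
  then show False using one_notin_M by blast
qed

definition kinv :: "'a \<Rightarrow> 'a" where "kinv k = (SOME y. y \<in> K \<and> k * y = 1)"

lemma kinv: "k \<in> K \<Longrightarrow> k \<noteq> 0 \<Longrightarrow> kinv k \<in> K \<and> k * kinv k = 1"
  unfolding kinv_def by (rule someI_ex) (use K_inv in blast)

lemma K_isu: "k \<in> K \<Longrightarrow> k \<noteq> 0 \<Longrightarrow> isu k"
  using kinv by (metis dvdI)

lemma kinv_isu: "k \<in> K \<Longrightarrow> k \<noteq> 0 \<Longrightarrow> isu (kinv k)"
  using kinv by (metis dvdI mult.commute)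

definition phi :: "'a \<Rightarrow> 'a" where "phi t = (THE k. k \<in> K \<and> t - k \<in> M)"

lemma phi_ex1: "\<exists>!k. k \<in> K \<and> t - k \<in> M"
proof -
  obtain k m where km: "k \<in> K" "m \<in> M" "t = k + m" using TKM by blast
  show ?thesis
  proof (rule ex1I[of _ k])
    show "k \<in> K \<and> t - k \<in> M" using km by simp
    fix k' assume k': "k' \<in> K \<and> t - k' \<in> M"
    have "k - k' = (t - k') - (t - k)" by simp
    moreover have "t - k' \<in> M" "t - k \<in> M" using k' km by auto
    ultimately have "k - k' \<in> M" using M_diff by metis
    moreover have "k - k' \<in> K" using k' km K_diff by simp
    ultimately show "k' = k" using KM0 by fastforce
  qed
qed

lemma phi: "phi t \<in> K \<and> t - phi t \<in> M"
  unfolding phi_def by (rule theI') (rule phi_ex1)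

lemma phi_eq: "k \<in> K \<Longrightarrow> t - k \<in> M \<Longrightarrow> phi t = k"
  using phi phi_ex1 by blast

lemma phi_K: "phi t \<in> K" using phi by blast

lemma phi_mult: "phi (a * b) = phi a * phi b"
proof (rule phi_eq)
  show "phi a * phi b \<in> K" using phi K_mult by blast
  have "a * b - phi a * phi b = (a - phi a) * b + phi a * (b - phi b)" by (simp add: algebra_simps)
  then show "a * b - phi a * phi b \<in> M" using phi M_add M_multL M_multR by metis
qed

lemma phi_KK: "k \<in> K \<Longrightarrow> phi k = k" using phi_eq M0 by simp

lemma phi_1: "phi 1 = 1" using phi_KK K1 by simp

lemma phi_M: "phi t = 0 \<longleftrightarrow> t \<in> M"
proof
  assume "phi t = 0" then show "t \<in> M" using phi[of t] by simp
next
  assume "t \<in> M" then show "phi t = 0" using phi_eq[OF K0, of t] by simp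
qed

lemma M_prime: "a * b \<in> M \<Longrightarrow> a \<notin> M \<Longrightarrow> b \<in> M"
  using phi_M phi_mult by (metis mult_eq_0_iff)

lemma phi_isu: "t \<notin> M \<Longrightarrow> isu (phi t)" using K_isu phi_K phi_M by blast

lemma isu_phi: "isu t \<Longrightarrow> isu (phi t)"
  by (metis dvd_def phi_1 phi_mult)

lemma isu_notM: "isu t \<Longrightarrow> t \<notin> M"
  by (metis dvdE M_multR one_notin_M)

end

context KMD begin

definition R :: "'a set" where "R = {t. phi t \<in> D}"

lemma R_iff: "t \<in> R \<longleftrightarrow> phi t \<in> D" unfolding R_def by simp

lemma D_R: "d \<in> D \<Longrightarrow> d \<in> R" using R_iff phi_KK DK by auto
lemma M_R: "m \<in> M \<Longrightarrow> m \<in> R" using R_iff phi_M D0 by metis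
lemma R_mult: "x \<in> R \<Longrightarrow> y \<in> R \<Longrightarrow> x * y \<in> R" using R_iff phi_mult D_mult by auto

lemma unit_R: "unit_in R x \<longleftrightarrow> x \<in> R \<and> isu x \<and> unit_in D (phi x)"
proof
  assume "unit_in R x"
  then obtain y where y: "x \<in> R" "y \<in> R" "x * y = 1" unfolding unit_in_def by blast
  have "phi x * phi y = 1" using y phi_mult phi_1 by metis
  then show "x \<in> R \<and> isu x \<and> unit_in D (phi x)" using y R_iff unfolding unit_in_def
    by (metis dvdI)
next
  assume a: "x \<in> R \<and> isu x \<and> unit_in D (phi x)"
  then obtain y where y: "1 = x * y" by (metis dvdE)
  obtain e where e: "e \<in> D" "phi x * e = 1" using a unfolding unit_in_def by blast
  have "phi x * phi y = 1" using y phi_mult phi_1 by metis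
  then have "phi y = e" using e by (metis mult.assoc mult.commute mult_1_right)
  then have "y \<in> R" using e R_iff by simp
  then show "unit_in R x" using a y unfolding unit_in_def by metis
qed

lemma unit_R_isu: "unit_in R x \<Longrightarrow> isu x" using unit_R by blast

lemma unitD_R: "d \<in> D \<Longrightarrow> unit_in R d \<longleftrightarrow> unit_in D d"
  using unit_R D_R phi_KK DK unfolding unit_in_def by (metis dvdI in_mono)

lemma isu_R1: "isu x \<Longrightarrow> phi x = 1 \<Longrightarrow> unit_in R x"
  using unit_R R_iff D1 unfolding unit_in_def by (metis mult_1_right)

definition nrm :: "'a \<Rightarrow> 'a" where "nrm t = t * kinv (phi t)"

lemma nrm: assumes "t \<notin> M"
  shows "phi (nrm t) = 1" "t = phi t * nrm t" "isu (kinv (phi t))" "nrm t \<in> R"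
    "isu (nrm t) \<longleftrightarrow> isu t"
proof -
  have k: "phi t \<in> K" "phi t \<noteq> 0" using phi_K phi_M assms by auto
  show "phi (nrm t) = 1" unfolding nrm_def phi_mult using kinv[OF k] phi_KK by simp
  show "t = phi t * nrm t" unfolding nrm_def using kinv[OF k]
    by (metis mult.assoc mult.commute mult_1_right)
  show u: "isu (kinv (phi t))" using kinv_isu[OF k] .
  show "nrm t \<in> R" using \<open>phi (nrm t) = 1\<close> R_iff D1 by simp
  show "isu (nrm t) \<longleftrightarrow> isu t" unfolding nrm_def using u isu_mult_iff by blast
qed

lemma refactor:
  assumes x: "x \<in> R" and e: "x = b * c"
  shows "\<exists>u v. isu u \<and> isu v \<and> b*u \<in> R \<and> c*v \<in> R \<and> x = (b*u)*(c*v)"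
proof -
  have sym: "\<exists>u v. isu u \<and> isu v \<and> b*u \<in> R \<and> c*v \<in> R \<and> x = (b*u)*(c*v)"
    if x: "x \<in> R" and e: "x = b * c" and b: "b \<notin> M" for b c
  proof -
    have k: "phi b \<in> K" "phi b \<noteq> 0" using phi_K phi_M b by auto
    have "phi (b * kinv (phi b)) = 1" using nrm(1)[OF b] unfolding nrm_def .
    then have 1: "b * kinv (phi b) \<in> R" using R_iff D1 by simp
    have "phi (c * phi b) = phi x" using e phi_mult phi_KK[OF k(1)] by (simp add: mult.commute)
    then have 2: "c * phi b \<in> R" using x R_iff by simp
    have 3: "x = (b * kinv (phi b)) * (c * phi b)" using e kinv[OF k]
      by (metis mult.assoc mult.commute mult_1_right)
    show ?thesis using 1 2 3 K_isu[OF k] kinv_isu[OF k] by blast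
  qed
  show ?thesis
  proof (cases "b \<in> M")
    case False then show ?thesis using sym x e by blast
  next
    case bM: True
    show ?thesis
    proof (cases "c \<in> M")
      case False
      obtain u v where "isu u" "isu v" "c*u \<in> R" "b*v \<in> R" "x = (c*u)*(b*v)"
        using sym[OF x _ False, of b] e by (metis mult.commute)
      then show ?thesis by (metis mult.commute)
    next
      case True
      then show ?thesis using bM M_R e by (intro exI[of _ 1]) simp
    qed
  qed
qed

lemma norm_ex: "\<exists>u. isu u \<and> t * u \<in> R"
proof (cases "t \<in> M")
  case True then show ?thesis using M_R by (intro exI[of _ 1]) simp
next
  case False then show ?thesis using nrm[OF False] unfolding nrm_def by blast
qed

end

context KMD begin

lemma F1: assumes fld: "subfield_of D" and x: "x \<in> R" shows "unit_in R x \<longleftrightarrow> isu x"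
proof
  assume "unit_in R x" then show "isu x" using unit_R by blast
next
  assume u: "isu x"
  have "phi x \<noteq> 0" using isu_notM[OF u] phi_M by blast
  then obtain e where "e \<in> D" "phi x * e = 1" using fld x R_iff unfolding subfield_of_def by blast
  then have "unit_in D (phi x)" using x R_iff unfolding unit_in_def by blast
  then show "unit_in R x" using unit_R x u by blast
qed

lemma F2: assumes fld: "subfield_of D" and x: "x \<in> R" shows "atom_in R x \<longleftrightarrow> atom_in UNIV x"
proof
  assume a: "atom_in R x"
  show "atom_in UNIV x" unfolding atomT
  proof (intro conjI allI impI)
    show "x \<noteq> 0" using a unfolding atom_in_def by blast
    show "\<not> isu x" using a F1[OF fld x] unfolding atom_in_def by blast
    fix b c assume e: "x = b * c"
    obtain u v where uv: "isu u" "isu v" "b*u \<in> R" "c*v \<in> R" "x = (b*u)*(c*v)"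
      using refactor[OF x e] by blast
    then have "unit_in R (b*u) \<or> unit_in R (c*v)" using a unfolding atom_in_def by blast
    then have "isu (b*u) \<or> isu (c*v)" using unit_R_isu by blast
    then show "isu b \<or> isu c" using isu_mult_iff by blast
  qed
next
  assume a: "atom_in UNIV x"
  show "atom_in R x" unfolding atom_in_def
  proof (intro conjI ballI impI)
    show "x \<in> R" by (rule x)
    show "x \<noteq> 0" using a unfolding atomT by blast
    show "\<not> unit_in R x" using a unit_R_isu unfolding atomT by blast
    fix b c assume "b \<in> R" "c \<in> R" "x = b * c"
    then show "unit_in R b \<or> unit_in R c" using a F1[OF fld] unfolding atomT by blast
  qed
qed

lemma F3a: assumes fld: "subfield_of D"
  shows "x \<in> R \<Longrightarrow> xs \<noteq> [] \<Longrightarrow> \<forall>y\<in>set xs. atom_in UNIV y \<Longrightarrow> x = prod_list xs \<Longrightarrow>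
    \<exists>ys. ys \<noteq> [] \<and> (\<forall>y\<in>set ys. atom_in R y) \<and> x = prod_list ys"
proof (induction "length xs" arbitrary: x xs rule: less_induct)
  case less
  obtain t xs' where xs: "xs = t # xs'" using less.prems(2) by (cases xs) auto
  show ?case
  proof (cases "xs' = []")
    case True
    then have "x = t" "atom_in UNIV t" using less.prems xs by auto
    then have "atom_in R x" using F2[OF fld] less.prems(1) by blast
    then show ?thesis using \<open>x = t\<close> by (intro exI[of _ "[x]"]) simp
  next
    case False
    have e: "x = t * prod_list xs'" using less.prems xs by simp
    obtain u v where uv: "isu u" "isu v" "t*u \<in> R" "prod_list xs' * v \<in> R"
        "x = (t*u)*(prod_list xs' * v)"
      using refactor[OF less.prems(1) e] by blast
    have "atom_in UNIV t" using less.prems(3) xs by simp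
    then have "atom_in UNIV (t*u)" by (rule atomT_unit[OF _ uv(1)])
    then have ta: "atom_in R (t*u)" using F2[OF fld uv(3)] by simp
    obtain z zs where xs': "xs' = z # zs" using False by (cases xs') auto
    have pv: "prod_list xs' * v = prod_list ((z*v) # zs)" using xs' by (simp add: ac_simps)
    have "atom_in UNIV z" using less.prems(3) xs xs' by simp
    then have "atom_in UNIV (z*v)" by (rule atomT_unit[OF _ uv(2)])
    then have za: "\<forall>y\<in>set ((z*v) # zs). atom_in UNIV y" using less.prems(3) xs xs' by simp
    have len: "length ((z*v) # zs) < length xs" using xs xs' by simp
    have "\<exists>ys. ys \<noteq> [] \<and> (\<forall>y\<in>set ys. atom_in R y) \<and> prod_list xs' * v = prod_list ys"
      by (rule less.hyps[OF len uv(4) _ za pv]) simp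
    then obtain ys where ys: "ys \<noteq> []" "\<forall>y\<in>set ys. atom_in R y" "prod_list xs' * v = prod_list ys"
      by blast
    show ?thesis using ys ta uv(5) by (intro exI[of _ "(t*u) # ys"]) simp
  qed
qed

lemma F3: assumes fld: "subfield_of D" and x: "x \<in> R"
  shows "atomic_elem_in R x \<longleftrightarrow> atomic_elem_in UNIV x"
proof
  assume a: "atomic_elem_in R x"
  then obtain xs where xs: "xs \<noteq> []" "\<forall>y\<in>set xs. atom_in R y" "x = prod_list xs"
    unfolding atomic_elem_in_def by blast
  have "\<forall>y\<in>set xs. atom_in UNIV y" using xs(2) F2[OF fld] unfolding atom_in_def by blast
  moreover have "\<not> unit_in UNIV x" using a F1[OF fld x] unitT unfolding atomic_elem_in_def by blast
  ultimately show "atomic_elem_in UNIV x" using a xs unfolding atomic_elem_in_def by blast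
next
  assume a: "atomic_elem_in UNIV x"
  then obtain xs where xs: "xs \<noteq> []" "\<forall>y\<in>set xs. atom_in UNIV y" "x = prod_list xs"
    unfolding atomic_elem_in_def by blast
  have "\<not> unit_in R x" using a unit_R_isu unitT unfolding atomic_elem_in_def by blast
  then show "atomic_elem_in R x" using F3a[OF fld x xs] a x unfolding atomic_elem_in_def by blast
qed

lemma atomicT_unit: "atomic_elem_in UNIV a \<Longrightarrow> isu u \<Longrightarrow> atomic_elem_in UNIV (a*u)"
proof -
  assume a: "atomic_elem_in UNIV a" and u: "isu u"
  have "TUA a" using a TUA_iff by blast
  then have "TUA (a*u)" using TUA_mult TUA_unit[OF u] by blast
  then have "isu (a*u) \<or> atomic_elem_in UNIV (a*u)" using TUA_iff by blast
  moreover have "\<not> isu a" using a unitT unfolding atomic_elem_in_def by blast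
  ultimately show ?thesis using isu_mult_iff by blast
qed

lemma part1: assumes fld: "subfield_of D"
  shows "completely_atomic R \<longleftrightarrow> completely_atomic (UNIV::'a set)"
proof
  assume ca: "completely_atomic R"
  show "completely_atomic (UNIV::'a set)" unfolding completely_atomic_def
  proof (intro allI impI, elim conjE)
    fix a b :: 'a assume a: "atomic_elem_in UNIV a" and d: "dvd_in UNIV b a" and nu: "\<not> unit_in UNIV b"
    obtain c where c: "a = b * c" using d unfolding dvd_in_def by blast
    obtain u where u: "isu u" "b * u \<in> R" using norm_ex by blast
    obtain v where v: "isu v" "c * v \<in> R" using norm_ex by blast
    have e: "(b*u)*(c*v) = a * (u*v)" using c by (simp add: ac_simps)
    have uv: "isu (u*v)" using u v isu_mult_iff by blast
    have "atomic_elem_in UNIV ((b*u)*(c*v))" using atomicT_unit[OF a uv] unfolding e .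
    then have "atomic_elem_in R ((b*u)*(c*v))" using F3[OF fld] R_mult u v by blast
    moreover have "dvd_in R (b*u) ((b*u)*(c*v))" using u v unfolding dvd_in_def by blast
    moreover have "\<not> unit_in R (b*u)" using nu unit_R_isu isu_mult_iff unitT by blast
    ultimately have "atomic_elem_in R (b*u)" using ca unfolding completely_atomic_def by blast
    then have "atomic_elem_in UNIV (b*u)" using F3[OF fld u(2)] by blast
    moreover obtain u' where "u * u' = 1" using u(1) by (metis dvdE)
    ultimately have "atomic_elem_in UNIV ((b*u)*u')" using atomicT_unit by (metis dvdI mult.commute)
    then show "atomic_elem_in UNIV b" using \<open>u * u' = 1\<close> by (simp add: mult.assoc)
  qed
next
  assume ca: "completely_atomic (UNIV::'a set)"
  show "completely_atomic R" unfolding completely_atomic_def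
  proof (intro allI impI, elim conjE)
    fix a b :: 'a assume a: "atomic_elem_in R a" and d: "dvd_in R b a" and nu: "\<not> unit_in R b"
    have aR: "a \<in> R" and bR: "b \<in> R" using a d unfolding atomic_elem_in_def dvd_in_def by auto
    have "atomic_elem_in UNIV a" using F3[OF fld aR] a by blast
    moreover have "dvd_in UNIV b a" using d unfolding dvd_in_def by blast
    moreover have "\<not> unit_in UNIV b" using nu F1[OF fld bR] unitT by blast
    ultimately have "atomic_elem_in UNIV b" using ca unfolding completely_atomic_def by blast
    then show "atomic_elem_in R b" using F3[OF fld bR] by blast
  qed
qed

end

context KMD begin

lemma Runit_mult: "unit_in R a \<Longrightarrow> unit_in R b \<Longrightarrow> unit_in R (a*b)"
proof -
  assume "unit_in R a" "unit_in R b"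
  then obtain a' b' where "a \<in> R" "b \<in> R" "a' \<in> R" "b' \<in> R" "a*a' = 1" "b*b' = 1"
    unfolding unit_in_def by blast
  then show "unit_in R (a*b)" unfolding unit_in_def
    by (intro conjI bexI[of _ "a'*b'"]) (auto simp: R_mult, metis mult.assoc mult.left_commute mult_1_right)
qed

lemma Runit_1: "unit_in R 1" using D_R[OF D1] unfolding unit_in_def by auto

lemma P1: assumes nf: "\<not> subfield_of D" and a: "atom_in R x" shows "x \<notin> M"
proof
  assume xM: "x \<in> M"
  obtain d0 where d0: "d0 \<in> D" "d0 \<noteq> 0" "\<not> (\<exists>y\<in>D. d0 * y = 1)"
    using nf D unfolding subfield_of_def by blast
  have k: "d0 \<in> K" using d0 DK by blast
  define e where "e = kinv d0"
  have e: "e \<in> K" "d0 * e = 1" using kinv[OF k d0(2)] e_def by auto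
  have "x = d0 * (e * x)" using e by (simp add: mult.assoc[symmetric])
  moreover have "d0 \<in> R" using D_R d0 by blast
  moreover have "e * x \<in> R" using M_R M_multL xM by blast
  ultimately have "unit_in R d0 \<or> unit_in R (e*x)" using a unfolding atom_in_def by blast
  moreover have "\<not> unit_in R d0" using unitD_R[OF d0(1)] d0(3) unfolding unit_in_def by blast
  moreover have "\<not> unit_in R (e*x)"
  proof
    assume "unit_in R (e*x)"
    then have "isu (e*x)" by (rule unit_R_isu)
    then have "e*x \<notin> M" by (rule isu_notM)
    then show False using M_multL xM by blast
  qed
  ultimately show False by blast
qed

lemma P2: assumes nf: "\<not> subfield_of D" and a: "atom_in R x" shows "TUA (nrm x)"
proof (cases "isu (nrm x)")
  case True then show ?thesis by (rule TUA_unit)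
next
  case nu: False
  have xM: "x \<notin> M" using P1[OF nf a] .
  have xe: "x = phi x * nrm x" using nrm(2)[OF xM] .
  have xR: "x \<in> R" using a unfolding atom_in_def by blast
  have px: "phi x \<in> R" using D_R xR R_iff by blast
  have "atom_in UNIV (nrm x)" unfolding atomT
  proof (intro conjI allI impI)
    show "nrm x \<noteq> 0" using a xe unfolding atom_in_def by (metis mult_zero_right)
    show "\<not> isu (nrm x)" by (rule nu)
    fix b c assume e: "nrm x = b * c"
    obtain u v where uv: "isu u" "isu v" "b*u \<in> R" "c*v \<in> R" "nrm x = (b*u)*(c*v)"
      using refactor[OF nrm(4)[OF xM] e] by blast
    have "x = (phi x * (b*u)) * (c*v)" using xe uv(5) by (simp add: mult.assoc)
    moreover have "phi x * (b*u) \<in> R" using R_mult px uv(3) by blast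
    ultimately have "unit_in R (phi x * (b*u)) \<or> unit_in R (c*v)"
      using a uv(4) unfolding atom_in_def by blast
    then have "isu (phi x * (b*u)) \<or> isu (c*v)" using unit_R_isu by blast
    then show "isu b \<or> isu c" using isu_mult_iff by blast
  qed
  then show ?thesis by (rule TUA_atom)
qed

lemma P3: assumes nf: "\<not> subfield_of D"
  shows "\<forall>y\<in>set xs. atom_in R y \<Longrightarrow> \<exists>k p. k \<in> K \<and> k \<noteq> 0 \<and> TUA p \<and> phi p = 1 \<and> prod_list xs = k * p"
proof (induction xs)
  case Nil
  show ?case using K1 phi_1 TUA_unit[of 1] by (intro exI[of _ 1]) simp
next
  case (Cons x xs)
  then obtain k p where kp: "k \<in> K" "k \<noteq> 0" "TUA p" "phi p = 1" "prod_list xs = k * p" by auto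
  have a: "atom_in R x" using Cons.prems by simp
  have xM: "x \<notin> M" using P1[OF nf a] .
  have 1: "phi x * k \<in> K" using K_mult phi_K kp(1) by blast
  have 2: "phi x * k \<noteq> 0" using xM phi_M kp(2) by simp
  have 3: "TUA (nrm x * p)" using TUA_mult P2[OF nf a] kp(3) by blast
  have 4: "phi (nrm x * p) = 1" using phi_mult nrm(1)[OF xM] kp(4) by simp
  have 5: "prod_list (x # xs) = (phi x * k) * (nrm x * p)"
    using nrm(2)[OF xM] kp(5) by (simp add: ac_simps)
  show ?case using 1 2 3 4 5 by blast
qed

definition RUA :: "'a \<Rightarrow> bool" where
  "RUA y \<longleftrightarrow> (\<exists>w L. unit_in R w \<and> (\<forall>x\<in>set L. atom_in R x) \<and> y = w * prod_list L)"

lemma RUA_mult: "RUA p \<Longrightarrow> RUA q \<Longrightarrow> RUA (p*q)"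
  unfolding RUA_def
proof (elim exE conjE)
  fix u xs v ys assume "unit_in R u" "\<forall>x\<in>set xs. atom_in R x" "p = u * prod_list xs"
    "unit_in R v" "\<forall>x\<in>set ys. atom_in R x" "q = v * prod_list ys"
  then show "\<exists>u xs. unit_in R u \<and> (\<forall>x\<in>set xs. atom_in R x) \<and> p * q = u * prod_list xs"
    by (intro exI[of _ "u*v"] exI[of _ "xs@ys"]) (simp add: ac_simps Runit_mult ball_Un)
qed

lemma Datom_R: assumes a: "atom_in D d" shows "atom_in R d"
  unfolding atom_in_def
proof (intro conjI ballI impI)
  have dD: "d \<in> D" and d0: "d \<noteq> 0" and nu: "\<not> unit_in D d" using a unfolding atom_in_def by auto
  show "d \<in> R" using D_R dD by blast
  show "d \<noteq> 0" by (rule d0)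
  show "\<not> unit_in R d" using unitD_R[OF dD] nu by blast
  fix b c assume bc: "b \<in> R" "c \<in> R" "d = b * c"
  have pd: "phi b * phi c = d" using bc phi_mult phi_KK dD DK by (metis in_mono)
  have "phi b \<in> D" "phi c \<in> D" using bc R_iff by auto
  then have "unit_in D (phi b) \<or> unit_in D (phi c)" using a pd unfolding atom_in_def by blast
  moreover have "isu d" using K_isu dD DK d0 by blast
  then have "isu b" "isu c" using bc(3) isu_mult_iff by auto
  ultimately show "unit_in R b \<or> unit_in R c" using unit_R bc by blast
qed

lemma RUA_D: assumes ad: "atomic_dom D" and d: "d \<in> D" "d \<noteq> 0" shows "RUA d"
proof (cases "unit_in D d")
  case True
  then have "unit_in R d" using unitD_R d by blast
  then show ?thesis unfolding RUA_def by (intro exI[of _ d] exI[of _ "[]"]) simp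
next
  case False
  then have "atomic_elem_in D d" using ad d unfolding atomic_dom_def by blast
  then obtain xs where "\<forall>x\<in>set xs. atom_in D x" "d = prod_list xs" unfolding atomic_elem_in_def by blast
  then show ?thesis unfolding RUA_def using Datom_R Runit_1
    by (intro exI[of _ 1] exI[of _ xs]) simp
qed

lemma T1atom: assumes a: "atom_in UNIV y" and p: "phi y = 1" shows "atom_in R y"
  unfolding atom_in_def
proof (intro conjI ballI impI)
  show yR: "y \<in> R" using p R_iff D1 by simp
  show "y \<noteq> 0" using a unfolding atomT by blast
  show "\<not> unit_in R y" using a unit_R_isu unfolding atomT by blast
  fix b c assume bc: "b \<in> R" "c \<in> R" "y = b * c"
  have pd: "phi b * phi c = 1" using bc phi_mult p by metis
  have D': "phi b \<in> D" "phi c \<in> D" using bc R_iff by auto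
  have "unit_in D (phi b)" "unit_in D (phi c)" using pd D' unfolding unit_in_def
    by (metis mult.commute)+
  moreover have "isu b \<or> isu c" using a bc(3) unfolding atomT by blast
  ultimately show "unit_in R b \<or> unit_in R c" using unit_R bc by blast
qed

lemma phi_prod1: "\<forall>n\<in>set ns. phi n = 1 \<Longrightarrow> phi (prod_list ns) = 1"
  by (induction ns) (auto simp: phi_mult phi_1)

lemma Q: "\<forall>t\<in>set ts. atom_in UNIV t \<Longrightarrow> phi (prod_list ts) \<noteq> 0 \<Longrightarrow>
  \<exists>c ns. c \<in> K \<and> c \<noteq> 0 \<and> (\<forall>n\<in>set ns. atom_in R n \<and> phi n = 1) \<and> prod_list ts = c * prod_list ns"
proof (induction ts)
  case Nil then show ?case using K1 by (intro exI[of _ 1] exI[of _ "[]"]) simp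
next
  case (Cons t ts)
  have ph: "phi t \<noteq> 0" "phi (prod_list ts) \<noteq> 0" using Cons.prems(2) phi_mult by auto
  then obtain c ns where cn: "c \<in> K" "c \<noteq> 0" "\<forall>n\<in>set ns. atom_in R n \<and> phi n = 1"
    "prod_list ts = c * prod_list ns" using Cons by auto
  have tM: "t \<notin> M" using ph phi_M by blast
  have "atom_in UNIV t" using Cons.prems by simp
  then have "atom_in UNIV (nrm t)" unfolding nrm_def by (rule atomT_unit[OF _ nrm(3)[OF tM]])
  then have na: "atom_in R (nrm t)" using T1atom nrm(1)[OF tM] by blast
  have 1: "phi t * c \<in> K" using K_mult phi_K cn(1) by blast
  have 2: "phi t * c \<noteq> 0" using ph cn(2) by simp
  have 3: "prod_list (t # ts) = (phi t * c) * prod_list (nrm t # ns)"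
    using nrm(2)[OF tM] cn(4) by (simp add: ac_simps)
  show ?case using 1 2 3 na nrm(1)[OF tM] cn(3) by (intro exI[of _ "phi t * c"] exI[of _ "nrm t # ns"]) simp
qed

lemma RUA_T1: assumes t: "TUA y" and p: "phi y = 1" shows "RUA y"
proof -
  obtain u ts where uts: "isu u" "\<forall>x\<in>set ts. atom_in UNIV x" "y = u * prod_list ts"
    using t unfolding TUA_def by blast
  have "phi (prod_list ts) \<noteq> 0" using p uts(3) phi_mult by auto
  then obtain c ns where cn: "c \<in> K" "c \<noteq> 0" "\<forall>n\<in>set ns. atom_in R n \<and> phi n = 1"
    "prod_list ts = c * prod_list ns" using Q uts(2) by blast
  have ye: "y = (u * c) * prod_list ns" using uts(3) cn(4) by (simp add: mult.assoc)
  have "phi (prod_list ns) = 1" using phi_prod1 cn(3) by blast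
  then have "phi (u * c) = 1" using p ye phi_mult by simp
  moreover have "isu (u * c)" using uts(1) K_isu[OF cn(1,2)] isu_mult_iff by blast
  ultimately have "unit_in R (u*c)" using isu_R1 by blast
  then show ?thesis unfolding RUA_def using cn(3) ye by blast
qed

lemma Ratom_unit: assumes a: "atom_in R a" and w: "unit_in R w" shows "atom_in R (w*a)"
  unfolding atom_in_def
proof (intro conjI ballI impI)
  obtain w' where w': "w \<in> R" "w' \<in> R" "w * w' = 1" using w unfolding unit_in_def by blast
  have aR: "a \<in> R" using a unfolding atom_in_def by blast
  have w'u: "unit_in R w'" using w' unfolding unit_in_def by (auto simp: mult.commute)
  show "w * a \<in> R" using R_mult w' aR by blast
  show "w * a \<noteq> 0" using a w' unfolding atom_in_def by auto
  show "\<not> unit_in R (w * a)"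
  proof
    assume "unit_in R (w*a)"
    then have "unit_in R (w' * (w * a))" using Runit_mult w'u by blast
    then show False using a w'(3) unfolding atom_in_def by (simp add: mult.assoc[symmetric] mult.commute[of w'])
  qed
  fix b c assume bc: "b \<in> R" "c \<in> R" "w * a = b * c"
  have "a = (w' * b) * c" using bc(3) w'(3)
    by (metis mult.assoc mult.commute mult_1_left)
  moreover have "w' * b \<in> R" using R_mult w' bc by blast
  ultimately have "unit_in R (w' * b) \<or> unit_in R c" using a bc(2) unfolding atom_in_def by blast
  moreover have "unit_in R (w' * b) \<Longrightarrow> unit_in R b"
  proof -
    assume "unit_in R (w' * b)"
    then have "unit_in R (w * (w' * b))" using Runit_mult w by blast
    then show "unit_in R b" using w'(3) by (simp add: mult.assoc[symmetric])
  qed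
  ultimately show "unit_in R b \<or> unit_in R c" by blast
qed

lemma RUA_atomic: assumes r: "RUA b" and bR: "b \<in> R" and b0: "b \<noteq> 0" and nu: "\<not> unit_in R b"
  shows "atomic_elem_in R b"
proof -
  obtain w L where wL: "unit_in R w" "\<forall>x\<in>set L. atom_in R x" "b = w * prod_list L"
    using r unfolding RUA_def by blast
  show ?thesis
  proof (cases L)
    case Nil then show ?thesis using wL nu by simp
  next
    case (Cons l L')
    have "atom_in R (w*l)" using Ratom_unit wL(1,2) Cons by simp
    then have "\<forall>x\<in>set ((w*l) # L'). atom_in R x" using wL(2) Cons by simp
    moreover have "b = prod_list ((w*l) # L')" using wL(3) Cons by (simp add: mult.assoc)
    ultimately show ?thesis unfolding atomic_elem_in_def using bR b0 nu by blast
  qed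
qed

lemma part2: assumes nf: "\<not> subfield_of D" and ad: "atomic_dom D" and ca: "completely_atomic (UNIV::'a set)"
  shows "completely_atomic R"
  unfolding completely_atomic_def
proof (intro allI impI, elim conjE)
  fix a b :: 'a assume a: "atomic_elem_in R a" and d: "dvd_in R b a" and nu: "\<not> unit_in R b"
  obtain c where bc: "b \<in> R" "c \<in> R" "a = b * c" using d unfolding dvd_in_def by blast
  obtain xs where xs: "\<forall>y\<in>set xs. atom_in R y" "a = prod_list xs" using a unfolding atomic_elem_in_def by blast
  obtain k p where kp: "k \<in> K" "k \<noteq> 0" "TUA p" "phi p = 1" "a = k * p" using P3[OF nf xs(1)] xs(2) by blast
  have "phi a = k" using kp phi_mult phi_KK by simp
  then have aM: "a \<notin> M" using kp(2) phi_M by blast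
  have bM: "b \<notin> M" using aM bc(3) M_multR by blast
  have ki: "kinv k \<in> K" "k * kinv k = 1" using kinv[OF kp(1,2)] by auto
  have "p = kinv k * a" using kp(5) ki(2) by (simp add: mult.assoc[symmetric] mult.commute[of "kinv k"])
  also have "\<dots> = nrm b * (kinv k * phi b * c)" using bc(3) nrm(2)[OF bM] by (simp add: ac_simps)
  finally have "nrm b dvd p" by (rule dvdI)
  then have "TUA (nrm b)" using TUA_dvd[OF ca kp(3)] by blast
  then have r1: "RUA (nrm b)" using RUA_T1 nrm(1)[OF bM] by blast
  have "phi b \<in> D" "phi b \<noteq> 0" using bc(1) R_iff bM phi_M by auto
  then have r2: "RUA (phi b)" using RUA_D[OF ad] by blast
  have "RUA b" using RUA_mult[OF r2 r1] nrm(2)[OF bM] by simp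
  moreover have "b \<noteq> 0" using bc(3) a unfolding atomic_elem_in_def by auto
  ultimately show "atomic_elem_in R b" using RUA_atomic bc(1) nu by blast
qed

end

theorem theorem3p1:
  fixes K D M :: "'a::idom set"
  assumes K: "subfield_of K"
    and M: "maximal_ideal M" and Mnz: "M \<noteq> {0}"
    and TKM: "\<forall>t::'a. \<exists>k\<in>K. \<exists>m\<in>M. t = k + m"
    and D: "subring_of D" and DK: "D \<subseteq> K"
  defines "R \<equiv> {d + m | d m. d \<in> D \<and> m \<in> M}"
  shows "(subfield_of D \<longrightarrow> (completely_atomic R \<longleftrightarrow> completely_atomic (UNIV::'a set)))
     \<and> (\<not> subfield_of D \<and> atomic_dom D \<and> completely_atomic (UNIV::'a set)
          \<longrightarrow> completely_atomic R)"
proof -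
  have Mi: "ideal_of M" and Mne: "M \<noteq> UNIV" using M unfolding maximal_ideal_def by auto
  interpret k: KMD K M D using K Mi Mne TKM D DK by unfold_locales
  have RR: "R = k.R"
  proof (rule set_eqI)
    fix t
    show "t \<in> R \<longleftrightarrow> t \<in> k.R"
    proof
      assume "t \<in> R"
      then obtain d m where dm: "d \<in> D" "m \<in> M" "t = d + m" unfolding R_def by blast
      have "k.phi t = d" using k.phi_eq[of d t] dm DK by auto
      then show "t \<in> k.R" using k.R_iff dm by simp
    next
      assume "t \<in> k.R"
      then have "k.phi t \<in> D" using k.R_iff by blast
      moreover have "t - k.phi t \<in> M" using k.phi by blast
      moreover have "t = k.phi t + (t - k.phi t)" by simp
      ultimately show "t \<in> R" unfolding R_def by blast
    qed
  qed
  show ?thesis unfolding RR using k.part1 k.part2 by blast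
qed

end
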